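(* Let $G$ and $H$ be finite simple graphs with ${\rm diam}(G\diamond H)=2$. Then $$E((G\diamond H)_{SR})=TW(G\diamond H)\cup E(\overline{G}\,\Box\,\overline{H})\cup E(G\times\overline{H})\cup E(\overline{G}\times H),$$ where all these edge sets are viewed as sets of unordered pairs of elements of $V(G)\times V(H)$.
   Context: The modular product $G\diamond H$ has vertex set $V(G)\times V(H)$; distinct vertices $(g,h)$ and $(g',h')$ are adjacent iff ($g=g'$ and $hh'\in E(H)$), or ($gg'\in E(G)$ and $h=h'$), or ($gg'\in E(G)$ and $hh'\in E(H)$), or ($g\neq g'$, $h\neq h'$, $gg'\notin E(G)$ and $hh'\notin E(H)$). $\overline{X}$ is the complement of $X$. In the Cartesian product $A\Box B$, $(a,b)(a',b')$ is an edge iff ($a=a'$ and $bb'\in E(B)$) or ($aa'\in E(A)$ and $b=b'$); in the direct product $A\times B$ it is an edge iff $aa'\in E(A)$ and $bb'\in E(B)$. For a graph $X$, $TW(X)$ is the set of edges $uv$ of $X$ with $N_X[u]=N_X[v]$. Two distinct vertices $u,v$ of $X$ in the same component are mutually maximally distant if there is no $x\in N_X(u)$ with $d_X(x,v)=d_X(u,v)+1$ and no $y\in N_X(v)$ with $d_X(y,u)=d_X(u,v)+1$; the strong resolving graph $X_{SR}$ has as edges exactly the mutually maximally distant pairs. *)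

theory Defs
  imports Main "HOL-Library.Extended_Nat"
begin

definition finite_simple_graph :: "'a set \<Rightarrow> 'a set set \<Rightarrow> bool" where
  "finite_simple_graph V E \<longleftrightarrow> finite V \<and>
     (\<forall>e\<in>E. \<exists>u v. u \<in> V \<and> v \<in> V \<and> u \<noteq> v \<and> e = {u, v})"

definition edge_rel :: "'a set set \<Rightarrow> ('a \<times> 'a) set" where
  "edge_rel E = {(u, v). u \<noteq> v \<and> {u, v} \<in> E}"

text \<open>Distance: length of a shortest walk; infinity if none.\<close>
definition gdist :: "'a set set \<Rightarrow> 'a \<Rightarrow> 'a \<Rightarrow> enat" where
  "gdist E u v = (INF n \<in> {n. (u, v) \<in> (edge_rel E) ^^ n}. enat n)"

definition diam :: "'a set \<Rightarrow> 'a set set \<Rightarrow> enat" where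
  "diam V E = (SUP u \<in> V. SUP v \<in> V. gdist E u v)"

definition open_nbhd :: "'a set set \<Rightarrow> 'a \<Rightarrow> 'a set" where
  "open_nbhd E u = {v. v \<noteq> u \<and> {u, v} \<in> E}"

definition closed_nbhd :: "'a set set \<Rightarrow> 'a \<Rightarrow> 'a set" where
  "closed_nbhd E u = insert u (open_nbhd E u)"

definition TW :: "'a set set \<Rightarrow> 'a set set" where
  "TW E = {{u, v} | u v. u \<noteq> v \<and> {u, v} \<in> E \<and> closed_nbhd E u = closed_nbhd E v}"

definition mutually_maximally_distant :: "'a set \<Rightarrow> 'a set set \<Rightarrow> 'a \<Rightarrow> 'a \<Rightarrow> bool" where
  "mutually_maximally_distant V E u v \<longleftrightarrow>
     u \<in> V \<and> v \<in> V \<and> u \<noteq> v \<and> gdist E u v \<noteq> \<infinity> \<and>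
     \<not> (\<exists>x \<in> open_nbhd E u. gdist E x v = gdist E u v + 1) \<and>
     \<not> (\<exists>y \<in> open_nbhd E v. gdist E y u = gdist E u v + 1)"

definition SR_edges :: "'a set \<Rightarrow> 'a set set \<Rightarrow> 'a set set" where
  "SR_edges V E = {{u, v} | u v. mutually_maximally_distant V E u v}"

definition compl_edges :: "'a set \<Rightarrow> 'a set set \<Rightarrow> 'a set set" where
  "compl_edges V E = {{u, v} | u v. u \<in> V \<and> v \<in> V \<and> u \<noteq> v \<and> {u, v} \<notin> E}"

definition modular_edges ::
  "'a set \<Rightarrow> 'a set set \<Rightarrow> 'b set \<Rightarrow> 'b set set \<Rightarrow> ('a \<times> 'b) set set" where
  "modular_edges VG EG VH EH =
     {{(g, h), (g', h')} | g h g' h'. g \<in> VG \<and> g' \<in> VG \<and> h \<in> VH \<and> h' \<in> VH \<and>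
        (g, h) \<noteq> (g', h') \<and>
        ((g = g' \<and> {h, h'} \<in> EH) \<or> ({g, g'} \<in> EG \<and> h = h') \<or>
         ({g, g'} \<in> EG \<and> {h, h'} \<in> EH) \<or>
         (g \<noteq> g' \<and> h \<noteq> h' \<and> {g, g'} \<notin> EG \<and> {h, h'} \<notin> EH))}"

definition cartesian_edges ::
  "'a set \<Rightarrow> 'a set set \<Rightarrow> 'b set \<Rightarrow> 'b set set \<Rightarrow> ('a \<times> 'b) set set" where
  "cartesian_edges VA EA VB EB =
     {{(a, b), (a', b')} | a b a' b'. a \<in> VA \<and> a' \<in> VA \<and> b \<in> VB \<and> b' \<in> VB \<and>
        ((a = a' \<and> {b, b'} \<in> EB) \<or> ({a, a'} \<in> EA \<and> b = b'))}"

definition direct_edges ::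
  "'a set \<Rightarrow> 'a set set \<Rightarrow> 'b set \<Rightarrow> 'b set set \<Rightarrow> ('a \<times> 'b) set set" where
  "direct_edges VA EA VB EB =
     {{(a, b), (a', b')} | a b a' b'. a \<in> VA \<and> a' \<in> VA \<and> b \<in> VB \<and> b' \<in> VB \<and>
        {a, a'} \<in> EA \<and> {b, b'} \<in> EB}"

end

theory Submission
  imports Defs
begin

lemma gdist_le: "(u, v) \<in> (edge_rel E) ^^ n \<Longrightarrow> gdist E u v \<le> enat n"
  unfolding gdist_def by (rule INF_lower2[of n]) auto

lemma gdist_self: "gdist E u u = 0"
  using gdist_le[where u=u and v=u and E=E and n=0] by (simp add: zero_enat_def[symmetric])

lemma gdist_ge1: "u \<noteq> v \<Longrightarrow> 1 \<le> gdist E u v"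
  unfolding gdist_def
proof (rule INF_greatest)
  fix n assume "u \<noteq> v" "n \<in> {n. (u, v) \<in> edge_rel E ^^ n}"
  then have "n \<noteq> 0" by (cases n) auto
  then show "1 \<le> enat n" by (simp add: one_enat_def)
qed

lemma gdist_ge2: "u \<noteq> v \<Longrightarrow> {u,v} \<notin> E \<Longrightarrow> 2 \<le> gdist E u v"
  unfolding gdist_def
proof (rule INF_greatest)
  fix n assume a: "u \<noteq> v" "{u,v} \<notin> E" "n \<in> {n. (u, v) \<in> edge_rel E ^^ n}"
  then have "n \<noteq> 0" by (cases n) auto
  moreover have "n \<noteq> 1" using a by (auto simp: edge_rel_def)
  ultimately have "n \<ge> 2" by arith
  then show "2 \<le> enat n" by (simp add: numeral_eq_enat)
qed

lemma gdist_adj: "u \<noteq> v \<Longrightarrow> {u,v} \<in> E \<Longrightarrow> gdist E u v = 1"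
proof -
  assume a: "u \<noteq> v" "{u,v} \<in> E"
  have "(u,v) \<in> edge_rel E ^^ 1" using a by (simp add: edge_rel_def)
  then have "gdist E u v \<le> 1" using gdist_le[where u=u and v=v and E=E and n=1] by (simp add: one_enat_def)
  with gdist_ge1[OF a(1), where E=E] show ?thesis by simp
qed

lemma gdist_le_diam: "u \<in> V \<Longrightarrow> v \<in> V \<Longrightarrow> gdist E u v \<le> diam V E"
  unfolding diam_def by (rule SUP_upper2[of u], assumption, rule SUP_upper, assumption)

lemma compl_mem: "{x,y} \<in> compl_edges V E \<Longrightarrow> x \<noteq> y \<and> {x,y} \<notin> E"
  unfolding compl_edges_def by (auto simp: doubleton_eq_iff insert_commute)

lemma compl_intro: "x \<in> V \<Longrightarrow> y \<in> V \<Longrightarrow> x \<noteq> y \<Longrightarrow> {x,y} \<notin> E \<Longrightarrow> {x,y} \<in> compl_edges V E"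
  unfolding compl_edges_def by blast

theorem mainTheorem7:
  fixes VG :: "'a set" and EG :: "'a set set" and VH :: "'b set" and EH :: "'b set set"
  assumes "finite_simple_graph VG EG" and "finite_simple_graph VH EH"
    and "diam (VG \<times> VH) (modular_edges VG EG VH EH) = 2"
  shows "SR_edges (VG \<times> VH) (modular_edges VG EG VH EH) =
           TW (modular_edges VG EG VH EH)
           \<union> cartesian_edges VG (compl_edges VG EG) VH (compl_edges VH EH)
           \<union> direct_edges VG EG VH (compl_edges VH EH)
           \<union> direct_edges VG (compl_edges VG EG) VH EH"
proof -
  define E where "E = modular_edges VG EG VH EH"
  define V where "V = VG \<times> VH"
  define cond where "cond = (\<lambda>g h g' h'. (g = g' \<and> {h, h'} \<in> EH) \<or> ({g, g'} \<in> EG \<and> h = h') \<or>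
         ({g, g'} \<in> EG \<and> {h, h'} \<in> EH) \<or>
         (g \<noteq> g' \<and> h \<noteq> h' \<and> {g, g'} \<notin> EG \<and> {h, h'} \<notin> EH))"
  have sG: "{a} \<notin> EG" for a
  proof
    assume "{a} \<in> EG"
    then obtain u v where "u \<noteq> v" "{a} = {u,v}"
      using assms(1) unfolding finite_simple_graph_def by blast
    then show False by (metis insertCI singletonD)
  qed
  have sH: "{a} \<notin> EH" for a
  proof
    assume "{a} \<in> EH"
    then obtain u v where "u \<noteq> v" "{a} = {u,v}"
      using assms(2) unfolding finite_simple_graph_def by blast
    then show False by (metis insertCI singletonD)
  qed
  have condsym: "\<And>g h g' h'. cond g h g' h' = cond g' h' g h"
    unfolding cond_def by (auto simp: insert_commute)
  have Eiff: "\<And>g h g' h'. {(g,h),(g',h')} \<in> E \<longleftrightarrow> g\<in>VG \<and> g'\<in>VG \<and> h\<in>VH \<and> h'\<in>VH \<and>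
      (g,h) \<noteq> (g',h') \<and> cond g h g' h'"
  proof -
    fix g h g' h'
    show "?thesis g h g' h'"
    proof
      assume "{(g,h),(g',h')} \<in> E"
      then obtain a b a' b' where e: "{(g,h),(g',h')} = {(a,b),(a',b')}"
        and c: "a\<in>VG \<and> a'\<in>VG \<and> b\<in>VH \<and> b'\<in>VH \<and> (a,b) \<noteq> (a',b') \<and> cond a b a' b'"
        unfolding E_def modular_edges_def cond_def by blast
      from e have "((g,h) = (a,b) \<and> (g',h') = (a',b')) \<or> ((g,h) = (a',b') \<and> (g',h') = (a,b))"
        by (simp add: doubleton_eq_iff)
      then show "g\<in>VG \<and> g'\<in>VG \<and> h\<in>VH \<and> h'\<in>VH \<and> (g,h) \<noteq> (g',h') \<and> cond g h g' h'"
        using c condsym by auto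
    next
      assume "g\<in>VG \<and> g'\<in>VG \<and> h\<in>VH \<and> h'\<in>VH \<and> (g,h) \<noteq> (g',h') \<and> cond g h g' h'"
      then show "{(g,h),(g',h')} \<in> E"
        unfolding E_def modular_edges_def cond_def by blast
    qed
  qed
  have EV: "\<And>u x. {u,x} \<in> E \<Longrightarrow> u \<in> V \<and> x \<in> V \<and> u \<noteq> x"
  proof -
    fix u x assume "{u,x} \<in> E"
    then show "u \<in> V \<and> x \<in> V \<and> u \<noteq> x" using Eiff[of "fst u" "snd u" "fst x" "snd x"]
      by (auto simp: V_def mem_Times_iff)
  qed
  have dle: "\<And>u v. u \<in> V \<Longrightarrow> v \<in> V \<Longrightarrow> gdist E u v \<le> 2"
    using gdist_le_diam assms(3) unfolding E_def V_def by metis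
  have dist: "\<And>u v. u \<in> V \<Longrightarrow> v \<in> V \<Longrightarrow>
     gdist E u v = (if u = v then 0 else if {u,v} \<in> E then 1 else 2)"
    using dle gdist_ge2 gdist_adj gdist_self by (metis antisym)
  have nbV: "\<And>u x. x \<in> open_nbhd E u \<Longrightarrow> x \<in> V \<and> u \<in> V \<and> x \<noteq> u \<and> {u,x} \<in> E"
    unfolding open_nbhd_def using EV by blast
  have mmd: "\<And>u v. mutually_maximally_distant V E u v \<longleftrightarrow>
      u \<in> V \<and> v \<in> V \<and> u \<noteq> v \<and> ({u,v} \<in> E \<longrightarrow> closed_nbhd E u = closed_nbhd E v)"
  proof -
    fix u v
    show "?thesis u v"
    proof
      assume m: "mutually_maximally_distant V E u v"
      then have uv: "u \<in> V" "v \<in> V" "u \<noteq> v" unfolding mutually_maximally_distant_def by auto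
      moreover have "closed_nbhd E u = closed_nbhd E v" if e: "{u,v} \<in> E"
      proof -
        have d1: "gdist E u v = 1" using dist uv e by simp
        have A: "x \<in> closed_nbhd E v" if x: "x \<in> open_nbhd E u" for x
        proof (rule ccontr)
          assume n: "x \<notin> closed_nbhd E v"
          then have "x \<noteq> v" "{v,x} \<notin> E" unfolding closed_nbhd_def open_nbhd_def by auto
          then have "gdist E x v = 2" using dist nbV[OF x] uv by (simp add: insert_commute)
          then show False using m x d1 unfolding mutually_maximally_distant_def
            by (simp add: one_add_one)
        qed
        have B: "x \<in> closed_nbhd E u" if x: "x \<in> open_nbhd E v" for x
        proof (rule ccontr)
          assume n: "x \<notin> closed_nbhd E u"
          then have "x \<noteq> u" "{u,x} \<notin> E" unfolding closed_nbhd_def open_nbhd_def by auto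
          then have "gdist E x u = 2" using dist nbV[OF x] uv by (simp add: insert_commute)
          then show False using m x d1 unfolding mutually_maximally_distant_def
            by (simp add: one_add_one)
        qed
        have "u \<in> closed_nbhd E v" "v \<in> closed_nbhd E u"
          using e uv unfolding closed_nbhd_def open_nbhd_def by (auto simp: insert_commute)
        then show ?thesis using A B unfolding closed_nbhd_def by blast
      qed
      ultimately show "u \<in> V \<and> v \<in> V \<and> u \<noteq> v \<and> ({u,v} \<in> E \<longrightarrow> closed_nbhd E u = closed_nbhd E v)"
        by blast
    next
      assume r: "u \<in> V \<and> v \<in> V \<and> u \<noteq> v \<and> ({u,v} \<in> E \<longrightarrow> closed_nbhd E u = closed_nbhd E v)"
      have fin: "gdist E u v \<noteq> \<infinity>" using dle r by (metis enat_ord_simps(5) numeral_ne_infinity)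
      show "mutually_maximally_distant V E u v"
      proof (cases "{u,v} \<in> E")
        case True
        then have d1: "gdist E u v = 1" using dist r by simp
        have c: "closed_nbhd E u = closed_nbhd E v" using r True by blast
        have A: "gdist E x v \<noteq> 2" if x: "x \<in> open_nbhd E u" for x
        proof -
          have "x \<in> closed_nbhd E v" using c x unfolding closed_nbhd_def by blast
          then have "x = v \<or> {v,x} \<in> E" unfolding closed_nbhd_def open_nbhd_def by auto
          then show ?thesis using dist nbV[OF x] r by (auto simp: insert_commute)
        qed
        have B: "gdist E x u \<noteq> 2" if x: "x \<in> open_nbhd E v" for x
        proof -
          have "x \<in> closed_nbhd E u" using c x unfolding closed_nbhd_def by blast
          then have "x = u \<or> {u,x} \<in> E" unfolding closed_nbhd_def open_nbhd_def by auto
          then show ?thesis using dist nbV[OF x] r by (auto simp: insert_commute)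
        qed
        show ?thesis unfolding mutually_maximally_distant_def using r fin A B d1
          by (simp add: one_add_one)
      next
        case False
        then have d2: "gdist E u v = 2" using dist r by simp
        have A: "gdist E x v \<noteq> 3" if x: "x \<in> open_nbhd E u" for x
          using dist nbV[OF x] r by auto
        have B: "gdist E x u \<noteq> 3" if x: "x \<in> open_nbhd E v" for x
          using dist nbV[OF x] r by auto
        have 3: "(2::enat) + 1 = 3" by simp
        show ?thesis unfolding mutually_maximally_distant_def using r fin A B d2 3
          by metis
      qed
    qed
  qed
  have NE: "cartesian_edges VG (compl_edges VG EG) VH (compl_edges VH EH)
           \<union> direct_edges VG EG VH (compl_edges VH EH)
           \<union> direct_edges VG (compl_edges VG EG) VH EH
      = {{u,v} | u v. u \<in> V \<and> v \<in> V \<and> u \<noteq> v \<and> {u,v} \<notin> E}"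
  proof (intro equalityI subsetI)
    fix e assume "e \<in> cartesian_edges VG (compl_edges VG EG) VH (compl_edges VH EH)
           \<union> direct_edges VG EG VH (compl_edges VH EH)
           \<union> direct_edges VG (compl_edges VG EG) VH EH"
    then obtain a b a' b' where e: "e = {(a,b),(a',b')}" and V: "a\<in>VG" "a'\<in>VG" "b\<in>VH" "b'\<in>VH"
      and c: "(a = a' \<and> {b,b'} \<in> compl_edges VH EH) \<or> ({a,a'} \<in> compl_edges VG EG \<and> b = b') \<or>
              ({a,a'} \<in> EG \<and> {b,b'} \<in> compl_edges VH EH) \<or> ({a,a'} \<in> compl_edges VG EG \<and> {b,b'} \<in> EH)"
    proof -
      assume r: "\<And>a b a' b'. e = {(a,b),(a',b')} \<Longrightarrow> a\<in>VG \<Longrightarrow> a'\<in>VG \<Longrightarrow> b\<in>VH \<Longrightarrow> b'\<in>VH \<Longrightarrow>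
        (a = a' \<and> {b,b'} \<in> compl_edges VH EH) \<or> ({a,a'} \<in> compl_edges VG EG \<and> b = b') \<or>
              ({a,a'} \<in> EG \<and> {b,b'} \<in> compl_edges VH EH) \<or> ({a,a'} \<in> compl_edges VG EG \<and> {b,b'} \<in> EH) \<Longrightarrow> thesis"
      from \<open>e \<in> _\<close> consider
        "e \<in> cartesian_edges VG (compl_edges VG EG) VH (compl_edges VH EH)" |
        "e \<in> direct_edges VG EG VH (compl_edges VH EH)" |
        "e \<in> direct_edges VG (compl_edges VG EG) VH EH" by blast
      then show thesis
      proof cases
        case 1
        then obtain a b a' b' where "e = {(a,b),(a',b')}" "a\<in>VG" "a'\<in>VG" "b\<in>VH" "b'\<in>VH"
          "(a = a' \<and> {b,b'} \<in> compl_edges VH EH) \<or> ({a,a'} \<in> compl_edges VG EG \<and> b = b')"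
          unfolding cartesian_edges_def by blast
        then show thesis using r by blast
      next
        case 2
        then obtain a b a' b' where "e = {(a,b),(a',b')}" "a\<in>VG" "a'\<in>VG" "b\<in>VH" "b'\<in>VH"
          "{a,a'} \<in> EG" "{b,b'} \<in> compl_edges VH EH"
          unfolding direct_edges_def by blast
        then show thesis using r by blast
      next
        case 3
        then obtain a b a' b' where "e = {(a,b),(a',b')}" "a\<in>VG" "a'\<in>VG" "b\<in>VH" "b'\<in>VH"
          "{a,a'} \<in> compl_edges VG EG" "{b,b'} \<in> EH"
          unfolding direct_edges_def by blast
        then show thesis using r by blast
      qed
    qed
    have c2: "(a = a' \<and> b \<noteq> b' \<and> {b,b'} \<notin> EH) \<or> (a \<noteq> a' \<and> {a,a'} \<notin> EG \<and> b = b') \<or>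
              ({a,a'} \<in> EG \<and> b \<noteq> b' \<and> {b,b'} \<notin> EH) \<or> (a \<noteq> a' \<and> {a,a'} \<notin> EG \<and> {b,b'} \<in> EH)"
      using c compl_mem[of b b' VH EH] compl_mem[of a a' VG EG] by blast
    have "(a,b) \<noteq> (a',b')" using c2 by auto
    moreover have "\<not> cond a b a' b'" using c2 sG[of a] sH[of b] unfolding cond_def by auto
    ultimately have "{(a,b),(a',b')} \<notin> E" using Eiff by blast
    then show "e \<in> {{u,v} | u v. u \<in> V \<and> v \<in> V \<and> u \<noteq> v \<and> {u,v} \<notin> E}"
      using e V \<open>(a,b) \<noteq> (a',b')\<close> unfolding V_def by blast
  next
    fix e assume "e \<in> {{u,v} | u v. u \<in> V \<and> v \<in> V \<and> u \<noteq> v \<and> {u,v} \<notin> E}"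
    then obtain a b a' b' where e: "e = {(a,b),(a',b')}" and V: "a\<in>VG" "a'\<in>VG" "b\<in>VH" "b'\<in>VH"
      and ne: "(a,b) \<noteq> (a',b')" and c: "\<not> cond a b a' b'"
    proof -
      assume r: "\<And>a b a' b'. e = {(a,b),(a',b')} \<Longrightarrow> a\<in>VG \<Longrightarrow> a'\<in>VG \<Longrightarrow> b\<in>VH \<Longrightarrow> b'\<in>VH \<Longrightarrow>
         (a,b) \<noteq> (a',b') \<Longrightarrow> \<not> cond a b a' b' \<Longrightarrow> thesis"
      from \<open>e \<in> _\<close> obtain u v where uv: "e = {u,v}" "u \<in> V" "v \<in> V" "u \<noteq> v" "{u,v} \<notin> E"
        by blast
      obtain a b where u: "u = (a,b)" by (cases u)
      obtain a' b' where v: "v = (a',b')" by (cases v)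
      have "\<not> cond a b a' b'" using uv Eiff[of a b a' b'] unfolding u v V_def by blast
      then show thesis using r[of a b a' b'] uv unfolding u v V_def by blast
    qed
    have c2: "(a = a' \<and> b \<noteq> b' \<and> {b,b'} \<notin> EH) \<or> (a \<noteq> a' \<and> {a,a'} \<notin> EG \<and> b = b') \<or>
              ({a,a'} \<in> EG \<and> b \<noteq> b' \<and> {b,b'} \<notin> EH) \<or> (a \<noteq> a' \<and> {a,a'} \<notin> EG \<and> {b,b'} \<in> EH)"
      using c ne sG[of a] sH[of b] unfolding cond_def by auto
    then have "(a = a' \<and> {b,b'} \<in> compl_edges VH EH) \<or> ({a,a'} \<in> compl_edges VG EG \<and> b = b') \<or>
              ({a,a'} \<in> EG \<and> {b,b'} \<in> compl_edges VH EH) \<or> ({a,a'} \<in> compl_edges VG EG \<and> {b,b'} \<in> EH)"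
      using compl_intro[of b VH b' EH] compl_intro[of a VG a' EG] V by blast
    then show "e \<in> cartesian_edges VG (compl_edges VG EG) VH (compl_edges VH EH)
           \<union> direct_edges VG EG VH (compl_edges VH EH)
           \<union> direct_edges VG (compl_edges VG EG) VH EH"
      unfolding e cartesian_edges_def direct_edges_def using V by blast
  qed
  have "SR_edges V E = TW E \<union> {{u,v} | u v. u \<in> V \<and> v \<in> V \<and> u \<noteq> v \<and> {u,v} \<notin> E}"
  proof (intro equalityI subsetI)
    fix e assume "e \<in> SR_edges V E"
    then obtain u v where e: "e = {u,v}" and m: "mutually_maximally_distant V E u v"
      unfolding SR_edges_def by blast
    have m2: "u \<in> V" "v \<in> V" "u \<noteq> v" "{u,v} \<in> E \<longrightarrow> closed_nbhd E u = closed_nbhd E v"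
      using m mmd by blast+
    show "e \<in> TW E \<union> {{u,v} | u v. u \<in> V \<and> v \<in> V \<and> u \<noteq> v \<and> {u,v} \<notin> E}"
    proof (cases "{u,v} \<in> E")
      case True
      then have "e \<in> TW E" unfolding TW_def e using m2 by blast
      then show ?thesis by blast
    next
      case False
      then show ?thesis using m2 e by blast
    qed
  next
    fix e assume "e \<in> TW E \<union> {{u,v} | u v. u \<in> V \<and> v \<in> V \<and> u \<noteq> v \<and> {u,v} \<notin> E}"
    then obtain u v where e: "e = {u,v}" and r: "u \<in> V" "v \<in> V" "u \<noteq> v"
        "{u,v} \<in> E \<longrightarrow> closed_nbhd E u = closed_nbhd E v"
      unfolding TW_def using EV by blast
    then have "mutually_maximally_distant V E u v" using mmd by blast
    then show "e \<in> SR_edges V E" unfolding SR_edges_def e by blast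
  qed
  then show ?thesis using NE unfolding E_def V_def by (simp add: Un_assoc)
qed

end
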